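(* Let $K\ge1$, $N=2^K-1$ and $\mu>0$. The $(N,K)$ binary simplex coded system with node service rate $\mu$ can serve arrival rates $(\lambda_1,\dots,\lambda_K)\in\mathbb{R}_{\ge0}^K$ if and only if $\lambda_1+\dots+\lambda_K\le 2^{K-1}\mu$. That is, its service capacity region is the simplex $\{(\lambda_1,\dots,\lambda_K)\in\mathbb{R}_{\ge0}^K:\sum_i\lambda_i\le 2^{K-1}\mu\}$.
   Context: Binary simplex coded system: $K$ files $f_1,\dots,f_K$ of equal size (elements of a vector space over a field of characteristic $2$) are stored on $N=2^K-1$ nodes indexed by the nonzero vectors $v\in\mathbb{F}_2^K$, node $v$ storing $\sum_{j=1}^K v_jf_j$. Each node has service rate $\mu$. Let $e_i$ be the $i$-th standard basis vector. The recovering sets of file $f_i$ are the systematic node $\{e_i\}$ and the $2^{K-1}-1$ disjoint repair groups $\{v,v+e_i\}$, $v\in\mathbb{F}_2^K\setminus\{0,e_i\}$ (each unordered pair counted once). Requests for $f_i$ arrive at rate $\lambda_i\ge0$. The system can serve $(\lambda_1,\dots,\lambda_K)$ (i.e., the vector lies in the service capacity region) if there exist nonnegative rates assigned to the recovering sets of each $f_i$, summing to $\lambda_i$ for every $i$, such that for every node the total rate assigned to recovering sets containing that node is at most $\mu$. *)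

theory Defs
  imports Complex_Main
begin

text \<open>A vector v in F_2^K (coordinates indexed by 0..K-1) is identified with its
support, a subset of {..<K}; vector addition is symmetric difference and the
standard basis vector e_i is {i}.\<close>

definition vadd :: "nat set \<Rightarrow> nat set \<Rightarrow> nat set" where
  "vadd u v = (u - v) \<union> (v - u)"

definition basis_vec :: "nat \<Rightarrow> nat set" where
  "basis_vec i = {i}"

text \<open>Nodes of the (2^K-1, K) binary simplex code: the nonzero vectors of F_2^K.\<close>
definition simplex_nodes :: "nat \<Rightarrow> nat set set" where
  "simplex_nodes K = {v. v \<subseteq> {..<K} \<and> v \<noteq> {}}"

text \<open>Recovering sets of file i: the systematic node {e_i} and the repair groups
{v, v + e_i} for v nonzero, v \<noteq> e_i (unordered pairs, each counted once
since they are sets).\<close>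
definition recovering_sets :: "nat \<Rightarrow> nat \<Rightarrow> nat set set set" where
  "recovering_sets K i =
     {{basis_vec i}} \<union>
     {{v, vadd v (basis_vec i)} | v. v \<in> simplex_nodes K \<and> v \<noteq> basis_vec i}"

definition can_serve :: "nat \<Rightarrow> real \<Rightarrow> (nat \<Rightarrow> real) \<Rightarrow> bool" where
  "can_serve K mu lam \<longleftrightarrow>
     (\<exists>r :: nat \<Rightarrow> nat set set \<Rightarrow> real.
        (\<forall>i<K. \<forall>R\<in>recovering_sets K i. r i R \<ge> 0) \<and>
        (\<forall>i<K. (\<Sum>R\<in>recovering_sets K i. r i R) = lam i) \<and>
        (\<forall>v\<in>simplex_nodes K.
           (\<Sum>i<K. \<Sum>R\<in>{R\<in>recovering_sets K i. v \<in> R}. r i R) \<le> mu))"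

end

theory Submission
  imports Defs
begin

definition gmap :: "nat \<Rightarrow> nat set \<Rightarrow> nat set set" where
  "gmap i w = (if w = {} then {{i}} else {w, insert i w})"

lemma rec_eq:
  assumes "i < K"
  shows "recovering_sets K i = gmap i ` Pow ({..<K} - {i})"
proof
  show "recovering_sets K i \<subseteq> gmap i ` Pow ({..<K} - {i})"
  proof
    fix R assume "R \<in> recovering_sets K i"
    then consider "R = {{i}}" | v where "R = {v, vadd v {i}}" "v \<subseteq> {..<K}" "v \<noteq> {}" "v \<noteq> {i}"
      unfolding recovering_sets_def basis_vec_def simplex_nodes_def by blast
    then show "R \<in> gmap i ` Pow ({..<K} - {i})"
    proof cases
      case 1
      then show ?thesis unfolding gmap_def by (intro image_eqI[of _ _ "{}"]) auto
    next
      case 2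
      show ?thesis
      proof (cases "i \<in> v")
        case True
        have "R = gmap i (v - {i})" using 2 True unfolding gmap_def vadd_def by auto
        then show ?thesis using 2 by auto
      next
        case False
        have "R = gmap i v" using 2 False unfolding gmap_def vadd_def by auto
        then show ?thesis using 2 False by auto
      qed
    qed
  qed
next
  show "gmap i ` Pow ({..<K} - {i}) \<subseteq> recovering_sets K i"
  proof
    fix R assume "R \<in> gmap i ` Pow ({..<K} - {i})"
    then obtain w where w: "w \<subseteq> {..<K} - {i}" "R = gmap i w" by auto
    show "R \<in> recovering_sets K i"
    proof (cases "w = {}")
      case True
      then show ?thesis using w unfolding gmap_def recovering_sets_def basis_vec_def by auto
    next
      case False
      have "vadd w {i} = insert i w" using w unfolding vadd_def by auto
      then have "R = {w, vadd w (basis_vec i)}" using w False unfolding gmap_def basis_vec_def by auto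
      moreover have "w \<in> simplex_nodes K" "w \<noteq> basis_vec i"
        using w False unfolding simplex_nodes_def basis_vec_def by auto
      ultimately show ?thesis unfolding recovering_sets_def by blast
    qed
  qed
qed

lemma gmap_inj: "inj_on (gmap i) (Pow ({..<K} - {i}))"
proof (rule inj_onI)
  fix v w assume v: "v \<in> Pow ({..<K} - {i})" and w: "w \<in> Pow ({..<K} - {i})"
    and eq: "gmap i v = gmap i w"
  have iv: "i \<notin> v" and iw: "i \<notin> w" using v w by auto
  show "v = w"
  proof (cases "v = {}"; cases "w = {}")
    assume "v = {}" "w = {}" then show ?thesis by simp
  next
    assume a: "v = {}" "w \<noteq> {}"
    then have "{{i}} = {w, insert i w}" using eq unfolding gmap_def by simp
    then have "w = {i}" by blast
    then show ?thesis using iw by simp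
  next
    assume a: "v \<noteq> {}" "w = {}"
    then have "{{i}} = {v, insert i v}" using eq unfolding gmap_def by simp
    then have "v = {i}" by blast
    then show ?thesis using iv by simp
  next
    assume a: "v \<noteq> {}" "w \<noteq> {}"
    then have e: "{v, insert i v} = {w, insert i w}" using eq unfolding gmap_def by simp
    have "v \<in> {w, insert i w}" using e by blast
    then show ?thesis using iv by blast
  qed
qed

lemma finite_rec: "i < K \<Longrightarrow> finite (recovering_sets K i)"
  by (simp add: rec_eq)

lemma card_rec:
  assumes "i < K" shows "card (recovering_sets K i) = 2 ^ (K - 1)"
proof -
  have "card (recovering_sets K i) = card (Pow ({..<K} - {i}))"
    using rec_eq[OF assms] gmap_inj card_image by metis
  also have "\<dots> = 2 ^ (K - 1)" using assms by (simp add: card_Pow)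
  finally show ?thesis .
qed

lemma unique_rec:
  assumes "i < K" "v \<in> simplex_nodes K"
  shows "{R \<in> recovering_sets K i. v \<in> R} = {gmap i (v - {i})}"
proof -
  have vs: "v \<subseteq> {..<K}" "v \<noteq> {}" using assms(2) unfolding simplex_nodes_def by auto
  have mem: "v \<in> gmap i (v - {i})"
  proof (cases "v - {i} = {}")
    case True
    then have "v = {i}" using vs by blast
    then show ?thesis unfolding gmap_def by simp
  next
    case False
    have "v = v - {i} \<or> v = insert i (v - {i})" by blast
    then show ?thesis using False unfolding gmap_def by auto
  qed
  have uniq: "w = v - {i}" if w: "w \<in> Pow ({..<K} - {i})" and vw: "v \<in> gmap i w" for w
  proof (cases "w = {}")
    case True
    then have "v = {i}" using vw unfolding gmap_def by simp
    then show ?thesis using True by simp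
  next
    case False
    then have "v = w \<or> v = insert i w" using vw unfolding gmap_def by simp
    moreover have "i \<notin> w" using w by blast
    ultimately show ?thesis by blast
  qed
  have pin: "v - {i} \<in> Pow ({..<K} - {i})" using vs by blast
  show ?thesis
  proof
    show "{R \<in> recovering_sets K i. v \<in> R} \<subseteq> {gmap i (v - {i})}"
    proof
      fix R assume "R \<in> {R \<in> recovering_sets K i. v \<in> R}"
      then obtain w where "w \<in> Pow ({..<K} - {i})" "R = gmap i w" "v \<in> R"
        using rec_eq[OF assms(1)] by blast
      then show "R \<in> {gmap i (v - {i})}" using uniq by blast
    qed
    show "{gmap i (v - {i})} \<subseteq> {R \<in> recovering_sets K i. v \<in> R}"
      using mem pin rec_eq[OF assms(1)] by blast
  qed
qed

definition oddset :: "nat \<Rightarrow> nat set set" where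
  "oddset K = {v. v \<subseteq> {..<K} \<and> odd (card v)}"

lemma rec_has_odd:
  assumes "i < K" "R \<in> recovering_sets K i" shows "\<exists>v\<in>R. v \<in> oddset K"
proof -
  have "R \<in> gmap i ` Pow ({..<K} - {i})" using assms rec_eq by simp
  then obtain w where w: "w \<subseteq> {..<K} - {i}" "R = gmap i w" by auto
  have fw: "finite w" using w finite_subset by blast
  have iw: "i \<notin> w" using w by blast
  have ws: "w \<subseteq> {..<K}" using w by blast
  have iws: "insert i w \<subseteq> {..<K}" using ws assms(1) by blast
  show ?thesis
  proof (cases "w = {}")
    case True
    then have "R = {{i}}" using w unfolding gmap_def by simp
    moreover have "{i} \<in> oddset K" using assms(1) unfolding oddset_def by simp
    ultimately show ?thesis by blast
  next
    case False
    then have R: "R = {w, insert i w}" using w unfolding gmap_def by simp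
    have "card (insert i w) = Suc (card w)" using fw iw by simp
    then have "odd (card w) \<or> odd (card (insert i w))" by auto
    then have "w \<in> oddset K \<or> insert i w \<in> oddset K" using ws iws unfolding oddset_def by simp
    then show ?thesis using R by blast
  qed
qed

lemma card_oddset:
  assumes "K \<ge> 1" shows "card (oddset K) = 2 ^ (K - 1)"
proof -
  define E where "E = {v. v \<subseteq> {..<K} \<and> even (card v)}"
  define h where "h = (\<lambda>v::nat set. if 0 \<in> v then v - {0} else insert 0 v)"
  have z: "(0::nat) < K" using assms by auto
  have hh: "h (h v) = v" for v unfolding h_def by auto
  have hsub: "h v \<subseteq> {..<K}" if "v \<subseteq> {..<K}" for v
    using that z unfolding h_def by auto
  have hpar: "odd (card (h v)) \<longleftrightarrow> even (card v)" if "finite v" for v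
  proof (cases "0 \<in> v")
    case True
    then have "card v > 0" using that card_gt_0_iff by blast
    moreover have "card (h v) = card v - 1" using True that unfolding h_def by simp
    ultimately show ?thesis by auto
  next
    case False
    then have "card (h v) = Suc (card v)" using that unfolding h_def by simp
    then show ?thesis by simp
  qed
  have hO: "h v \<in> E" if "v \<in> oddset K" for v
  proof -
    have vs: "v \<subseteq> {..<K}" and o: "odd (card v)" using that unfolding oddset_def by auto
    have f: "finite v" using vs finite_subset by blast
    have "even (card (h v))" using hpar[OF f] o by simp
    then show ?thesis using hsub[OF vs] unfolding E_def by simp
  qed
  have hE: "h v \<in> oddset K" if "v \<in> E" for v
  proof -
    have vs: "v \<subseteq> {..<K}" and o: "even (card v)" using that unfolding E_def by auto
    have f: "finite v" using vs finite_subset by blast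
    have "odd (card (h v))" using hpar[OF f] o by simp
    then show ?thesis using hsub[OF vs] unfolding oddset_def by simp
  qed
  have "bij_betw h (oddset K) E"
    by (rule bij_betw_byWitness[where f'=h]) (use hh hO hE in blast)+
  then have c1: "card (oddset K) = card E" by (rule bij_betw_same_card)
  have U: "oddset K \<union> E = Pow {..<K}" unfolding oddset_def E_def by auto
  have I: "oddset K \<inter> E = {}" unfolding oddset_def E_def by auto
  have F: "finite (oddset K)" "finite E" unfolding oddset_def E_def by auto
  have "card (oddset K) + card E = card (Pow {..<K::nat})"
    using card_Un_disjoint[OF F I] U by simp
  also have "\<dots> = 2 ^ K" by (simp add: card_Pow)
  finally have "2 * card (oddset K) = 2 ^ K" using c1 by simp
  moreover have "(2::nat) ^ K = 2 * 2 ^ (K - 1)" using z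
    by (metis Suc_diff_1 power_Suc)
  ultimately show ?thesis by simp
qed

theorem theorem3:
  fixes K :: nat and mu :: real and lam :: "nat \<Rightarrow> real"
  assumes "K \<ge> 1" and "mu > 0" and "\<forall>i<K. lam i \<ge> 0"
  shows "can_serve K mu lam \<longleftrightarrow> (\<Sum>i<K. lam i) \<le> 2 ^ (K - 1) * mu"
proof
  assume "can_serve K mu lam"
  then obtain r where r0: "\<forall>i<K. \<forall>R\<in>recovering_sets K i. r i R \<ge> 0"
    and rs: "\<forall>i<K. (\<Sum>R\<in>recovering_sets K i. r i R) = lam i"
    and rl: "\<forall>v\<in>simplex_nodes K. (\<Sum>i<K. \<Sum>R\<in>{R\<in>recovering_sets K i. v \<in> R}. r i R) \<le> mu"
    unfolding can_serve_def by blast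
  have fO: "finite (oddset K)"
    by (rule finite_subset[of _ "Pow {..<K}"]) (auto simp: oddset_def)
  have Osub: "oddset K \<subseteq> simplex_nodes K" unfolding oddset_def simplex_nodes_def by auto
  have step: "r i R \<le> (\<Sum>v\<in>oddset K. if v \<in> R then r i R else 0)"
    if iK: "i < K" and RR: "R \<in> recovering_sets K i" for i R
  proof -
    obtain v where v: "v \<in> R" "v \<in> oddset K" using rec_has_odd[OF iK RR] by blast
    have "(if v \<in> R then r i R else 0) \<le> (\<Sum>v\<in>oddset K. if v \<in> R then r i R else 0)"
      by (rule member_le_sum) (use v fO r0 iK RR in auto)
    then show ?thesis using v by simp
  qed
  have "(\<Sum>i<K. lam i) = (\<Sum>i<K. \<Sum>R\<in>recovering_sets K i. r i R)" using rs by (intro sum.cong refl) simp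
  also have "\<dots> \<le> (\<Sum>i<K. \<Sum>R\<in>recovering_sets K i. \<Sum>v\<in>oddset K. if v \<in> R then r i R else 0)"
    by (rule sum_mono, rule sum_mono) (use step in blast)
  also have "\<dots> = (\<Sum>v\<in>oddset K. \<Sum>i<K. \<Sum>R\<in>recovering_sets K i. if v \<in> R then r i R else 0)"
  proof -
    have "(\<Sum>i<K. \<Sum>R\<in>recovering_sets K i. \<Sum>v\<in>oddset K. if v \<in> R then r i R else 0)
        = (\<Sum>i<K. \<Sum>v\<in>oddset K. \<Sum>R\<in>recovering_sets K i. if v \<in> R then r i R else 0)"
      by (rule sum.cong[OF refl], rule sum.swap)
    also have "\<dots> = (\<Sum>v\<in>oddset K. \<Sum>i<K. \<Sum>R\<in>recovering_sets K i. if v \<in> R then r i R else 0)"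
      by (rule sum.swap)
    finally show ?thesis .
  qed
  also have "\<dots> = (\<Sum>v\<in>oddset K. \<Sum>i<K. \<Sum>R\<in>{R\<in>recovering_sets K i. v \<in> R}. r i R)"
    by (rule sum.cong[OF refl], rule sum.cong[OF refl], simp add: sum.inter_filter finite_rec)
  also have "\<dots> \<le> (\<Sum>v\<in>oddset K. mu)"
    by (rule sum_mono) (use rl Osub in blast)
  also have "\<dots> = 2 ^ (K - 1) * mu" using card_oddset[OF assms(1)] by simp
  finally show "(\<Sum>i<K. lam i) \<le> 2 ^ (K - 1) * mu" .
next
  assume H: "(\<Sum>i<K. lam i) \<le> 2 ^ (K - 1) * mu"
  define r where "r = (\<lambda>i (R::nat set set). lam i / 2 ^ (K - 1))"
  show "can_serve K mu lam"
    unfolding can_serve_def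
  proof (intro exI[of _ r] conjI allI impI ballI)
    fix i R assume "i < K" "R \<in> recovering_sets K i"
    then show "0 \<le> r i R" using assms(3) unfolding r_def by auto
  next
    fix i assume "i < K"
    then show "(\<Sum>R\<in>recovering_sets K i. r i R) = lam i"
      unfolding r_def by (simp add: card_rec)
  next
    fix v assume v: "v \<in> simplex_nodes K"
    have "(\<Sum>i<K. \<Sum>R\<in>{R\<in>recovering_sets K i. v \<in> R}. r i R) = (\<Sum>i<K. lam i / 2 ^ (K - 1))"
      by (intro sum.cong refl) (simp add: unique_rec v r_def)
    also have "\<dots> = (\<Sum>i<K. lam i) / 2 ^ (K - 1)" by (simp add: sum_divide_distrib)
    also have "\<dots> \<le> mu" using H by (simp add: divide_le_eq mult.commute)
    finally show "(\<Sum>i<K. \<Sum>R\<in>{R\<in>recovering_sets K i. v \<in> R}. r i R) \<le> mu" .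
  qed
qed

end
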